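(* Let $T=\mathbb{T}_q$ be the homogeneous tree in which every vertex has degree $q+1$, where $q\ge2$ is an integer, and let $P$ be simple random walk, $p(x,y)=1/(q+1)$ for $x\sim y$. Let $\rho=2\sqrt q/(q+1)$ and $\lambda\in\mathbb{C}\setminus[-\rho,\rho]$. Then every $\lambda$-polyharmonic function $f$ of order $n\ge1$ has an integral representation $$f(x)=\sum_{k=0}^{n-1}\int_{\partial T}K(x,\xi\mid\lambda)\,\mathrm{hor}(x,\xi)^k\,d\bar\nu_k(\xi),\qquad x\in T,$$ where the complex distributions $\bar\nu_0,\dots,\bar\nu_{n-1}$ are uniquely determined by $f$.
   Context: Fix a root $o$. $\partial T$ is the set of ends (classes of geodesic rays modulo finite initial segments). $x\wedge\xi$ is the last common vertex of the geodesics $\pi(o,x)$ and $\pi(o,\xi)$. The horocycle index is $\mathrm{hor}(x,\xi)=d(x,x\wedge\xi)-d(o,x\wedge\xi)$. For $\lambda\in\mathbb{C}\setminus[-\rho,\rho]$ (the resolvent set of $P$ on $\ell^2(T)$), $G(x,y\mid\lambda)=((\lambda I-P)^{-1}\mathbf 1_y)(x)$, and $K(x,\xi\mid\lambda)=G(x,x\wedge\xi\mid\lambda)/G(o,x\wedge\xi\mid\lambda)$. Explicitly, $K(x,\xi\mid\lambda)=F(\lambda)^{\mathrm{hor}(x,\xi)}$ with $F(\lambda)=\frac{(q+1)\lambda}{2q}\bigl(1-\sqrt{1-\rho^2/\lambda^2}\bigr)$. $f$ is $\lambda$-polyharmonic of order $n$ if $(\lambda I-P)^nf=0$, where $Pf(x)=\sum_yp(x,y)f(y)$.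 $x^-$ is the neighbour of $x\ne o$ closer to $o$, and $\partial T_x$ is the set of ends whose ray from $o$ passes through $x$. A complex distribution is $\nu:\{\partial T_x\}\to\mathbb{C}$ with $\nu(\partial T_x)=\sum_{y^-=x}\nu(\partial T_y)$. Integral of a locally constant $\varphi$ (constant value $\varphi_x$ on $\partial T_x\setminus\bigcup_{y\in\tau,y^-=x}\partial T_y$ for $x$ in a finite subtree $\tau\ni o$): $\int\varphi\,d\nu=\sum_{x\in\tau}\varphi_x(\nu(\partial T_x)-\sum_{y\in\tau,y^-=x}\nu(\partial T_y))$. For fixed $x$, the function $\xi\mapsto K(x,\xi\mid\lambda)\,\mathrm{hor}(x,\xi)^k$ is locally constant, with $\tau=\pi(o,x)$. *)

theory Defs
  imports Complex_Main
begin

text \<open>Model of the homogeneous tree of degree q+1. A vertex is a list of labels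
recording the path from the root o = []; the HEAD of the list is the last step.
The first step from the root (the last list element) has a label in {0..q}
(q+1 choices), every later step a label in {0..<q} (q choices).
The predecessor x^- of x \<noteq> o is tl x.\<close>

definition tree_vertex :: "nat \<Rightarrow> nat list \<Rightarrow> bool" where
  "tree_vertex q xs \<longleftrightarrow> xs = [] \<or> (last xs \<le> q \<and> (\<forall>i\<in>set (butlast xs). i < q))"

definition tree_children :: "nat \<Rightarrow> nat list \<Rightarrow> nat list set" where
  "tree_children q x = (if x = [] then {[i] | i. i \<le> q} else {i # x | i. i < q})"

definition tree_neighbours :: "nat \<Rightarrow> nat list \<Rightarrow> nat list set" where
  "tree_neighbours q x = tree_children q x \<union> (if x = [] then {} else {tl x})"

definition srw_op :: "nat \<Rightarrow> (nat list \<Rightarrow> complex) \<Rightarrow> nat list \<Rightarrow> complex" where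
  "srw_op q f x = (\<Sum>y\<in>tree_neighbours q x. f y) / of_nat (q + 1)"

definition resolvent_op :: "nat \<Rightarrow> complex \<Rightarrow> (nat list \<Rightarrow> complex) \<Rightarrow> nat list \<Rightarrow> complex" where
  "resolvent_op q lam f x = lam * f x - srw_op q f x"

definition polyharmonic :: "nat \<Rightarrow> complex \<Rightarrow> nat \<Rightarrow> (nat list \<Rightarrow> complex) \<Rightarrow> bool" where
  "polyharmonic q lam n f \<longleftrightarrow> (\<forall>x. tree_vertex q x \<longrightarrow> ((resolvent_op q lam ^^ n) f) x = 0)"

definition spec_radius :: "nat \<Rightarrow> real" where
  "spec_radius q = 2 * sqrt (real q) / real (q + 1)"

definition F_fun :: "nat \<Rightarrow> complex \<Rightarrow> complex" where
  "F_fun q lam = of_nat (q + 1) * lam / of_nat (2 * q)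
      * (1 - csqrt (1 - (complex_of_real (spec_radius q))\<^sup>2 / lam\<^sup>2))"

text \<open>Complex distribution, indexed by vertices: nu x stands for nu(\<partial>T_x).\<close>
definition is_distribution :: "nat \<Rightarrow> (nat list \<Rightarrow> complex) \<Rightarrow> bool" where
  "is_distribution q nu \<longleftrightarrow>
     (\<forall>x. tree_vertex q x \<longrightarrow> nu x = (\<Sum>y\<in>tree_children q x. nu y))"

text \<open>Integral of a locally constant function given by values phi on a finite subtree tau.\<close>
definition lc_integral :: "(nat list \<Rightarrow> complex) \<Rightarrow> nat list set \<Rightarrow> (nat list \<Rightarrow> complex) \<Rightarrow> complex" where
  "lc_integral nu tau phi =
     (\<Sum>v\<in>tau. phi v * (nu v - (\<Sum>y\<in>{y\<in>tau. y \<noteq> [] \<and> tl y = v}. nu y)))"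

definition geod_path :: "nat list \<Rightarrow> nat list set" where
  "geod_path x = {drop i x | i. i \<le> length x}"

text \<open>hor(x,\<xi>) for ends \<xi> with x \<and> \<xi> = v (v on \<pi>(o,x)): d(x,v) - d(o,v).\<close>
definition hor_at :: "nat list \<Rightarrow> nat list \<Rightarrow> int" where
  "hor_at x v = int (length x - length v) - int (length v)"

text \<open>\<integral> K(x,\<xi>|\<lambda>) hor(x,\<xi>)^k d\<nu>(\<xi>), with K = F(\<lambda>)^hor, over the subtree \<pi>(o,x).\<close>
definition kernel_integral :: "nat \<Rightarrow> complex \<Rightarrow> nat \<Rightarrow> (nat list \<Rightarrow> complex) \<Rightarrow> nat list \<Rightarrow> complex" where
  "kernel_integral q lam k nu x =
     lc_integral nu (geod_path x) (\<lambda>v. F_fun q lam powi hor_at x v * (of_int (hor_at x v)) ^ k)"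

end

theory Submission
  imports Defs
begin

section \<open>Tree combinatorics\<close>

lemma vertex_drop: "tree_vertex q x \<Longrightarrow> tree_vertex q (drop i x)"
  unfolding tree_vertex_def
  by (auto simp: butlast_drop last_drop dest: in_set_dropD)

lemma vertex_tl: "tree_vertex q x \<Longrightarrow> tree_vertex q (tl x)"
  using vertex_drop[of q x 1] by (simp add: drop_Suc)

lemma vertex_Cons_Nil: "i \<le> q \<Longrightarrow> tree_vertex q [i]"
  unfolding tree_vertex_def by simp

lemma vertex_Cons: "tree_vertex q x \<Longrightarrow> x \<noteq> [] \<Longrightarrow> i < q \<Longrightarrow> tree_vertex q (i # x)"
  unfolding tree_vertex_def by auto

lemma children_vertex: "tree_vertex q x \<Longrightarrow> y \<in> tree_children q x \<Longrightarrow> tree_vertex q y"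
  unfolding tree_children_def
  by (auto split: if_splits intro: vertex_Cons_Nil vertex_Cons)

lemma neighbours_vertex: "tree_vertex q x \<Longrightarrow> y \<in> tree_neighbours q x \<Longrightarrow> tree_vertex q y"
  unfolding tree_neighbours_def
  by (auto split: if_splits intro: children_vertex vertex_tl)

lemma sum_children_Nil: "(\<Sum>y\<in>tree_children q []. g y) = (\<Sum>i\<le>q. g [i])"
proof -
  have "tree_children q [] = (\<lambda>i. [i]) ` {..q}" unfolding tree_children_def by auto
  moreover have "inj_on (\<lambda>i. [i]) {..q}" by (auto simp: inj_on_def)
  ultimately show ?thesis by (simp add: sum.reindex)
qed

lemma sum_children_Cons: "x \<noteq> [] \<Longrightarrow> (\<Sum>y\<in>tree_children q x. g y) = (\<Sum>i<q. g (i # x))"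
proof -
  assume "x \<noteq> []"
  then have "tree_children q x = (\<lambda>i. i # x) ` {..<q}" unfolding tree_children_def by auto
  moreover have "inj_on (\<lambda>i. i # x) {..<q}" by (auto simp: inj_on_def)
  ultimately show ?thesis by (simp add: sum.reindex)
qed

lemma sum_neighbours_Nil: "(\<Sum>y\<in>tree_neighbours q []. g y) = (\<Sum>i\<le>q. g [i])"
  unfolding tree_neighbours_def by (simp add: sum_children_Nil)

lemma sum_neighbours_Cons: "x \<noteq> [] \<Longrightarrow>
   (\<Sum>y\<in>tree_neighbours q x. g y) = (\<Sum>i<q. g (i # x)) + g (tl x)"
proof -
  assume x: "x \<noteq> []"
  have fin: "finite (tree_children q x)"
    using x unfolding tree_children_def by auto
  have "tl x \<notin> tree_children q x"
    using x unfolding tree_children_def by (auto dest: arg_cong[of _ _ length])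
  then have "(\<Sum>y\<in>tree_neighbours q x. g y) = (\<Sum>y\<in>tree_children q x. g y) + g (tl x)"
    using x fin unfolding tree_neighbours_def by (simp add: sum.insert_if add.commute)
  then show ?thesis using x by (simp add: sum_children_Cons)
qed

section \<open>The integral operator\<close>

definition Ig :: "(int \<Rightarrow> complex) \<Rightarrow> (nat list \<Rightarrow> complex) \<Rightarrow> nat list \<Rightarrow> complex" where
  "Ig \<phi> \<nu> x = (\<Sum>i\<le>length x. \<phi> (2 * int i - int (length x)) *
      (\<nu> (drop i x) - (if i = 0 then 0 else \<nu> (drop (i - 1) x))))"

lemma Ig_Nil: "Ig \<phi> \<nu> [] = \<phi> 0 * \<nu> []"
  unfolding Ig_def by simp

lemma Ig_Cons: "Ig \<phi> \<nu> (a # x) =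
   (\<phi> (- int (length x) - 1) - \<phi> (1 - int (length x))) * \<nu> (a # x) + Ig (\<lambda>h. \<phi> (h + 1)) \<nu> x"
proof -
  define m where "m = length x"
  have "Ig \<phi> \<nu> (a # x) = \<phi> (- int m - 1) * \<nu> (a # x) +
     (\<Sum>i\<le>m. \<phi> (2 * int i - int m + 1) * (\<nu> (drop i x) - \<nu> (drop i (a # x))))"
    unfolding Ig_def m_def[symmetric] length_Cons sum.atMost_Suc_shift
    apply (simp del: sum.atMost_Suc add: algebra_simps)
    by (rule disjI2, rule arg_cong[where f=\<phi>]) simp
  also have "(\<Sum>i\<le>m. \<phi> (2 * int i - int m + 1) * (\<nu> (drop i x) - \<nu> (drop i (a # x))))
     = (\<Sum>i\<le>m. \<phi> (2 * int i - int m + 1) * (\<nu> (drop i x) - (if i = 0 then 0 else \<nu> (drop (i - 1) x)))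
         - (if i = 0 then \<phi> (1 - int m) * \<nu> (a # x) else 0))"
    by (rule sum.cong) (auto simp: algebra_simps drop_Cons')
  also have "\<dots> = Ig (\<lambda>h. \<phi> (h + 1)) \<nu> x - \<phi> (1 - int m) * \<nu> (a # x)"
    unfolding Ig_def m_def[symmetric] by (simp add: sum_subtractf sum.distrib algebra_simps)
  finally show ?thesis unfolding m_def by (simp add: algebra_simps)
qed

lemma Ig_lin: "Ig (\<lambda>h. a * \<phi>1 h + b * \<phi>2 h) \<nu> x = a * Ig \<phi>1 \<nu> x + b * Ig \<phi>2 \<nu> x"
  unfolding Ig_def sum_distrib_left sum.distrib[symmetric]
  by (intro sum.cong refl) (simp add: algebra_simps)

lemma Ig_sum: "Ig (\<lambda>h. \<Sum>j\<in>J. g j h) \<nu> x = (\<Sum>j\<in>J. Ig (g j) \<nu> x)"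
  by (simp add: Ig_def sum_distrib_right) (rule sum.swap)

lemma Ig_zero: "Ig (\<lambda>h. 0) \<nu> x = 0"
  by (simp add: Ig_def)

lemma Ig_zero_nu: "Ig \<phi> (\<lambda>y. 0) x = 0"
  by (simp add: Ig_def)

lemma Ig_add_nu: "Ig \<phi> (\<lambda>y. \<nu> y + \<nu>' y) x = Ig \<phi> \<nu> x + Ig \<phi> \<nu>' x"
  unfolding Ig_def sum.distrib[symmetric]
  by (intro sum.cong refl) (simp add: algebra_simps)

lemma Ig_diff_nu: "Ig \<phi> (\<lambda>y. \<nu> y - \<nu>' y) x = Ig \<phi> \<nu> x - Ig \<phi> \<nu>' x"
  unfolding Ig_def sum_subtractf[symmetric]
  by (intro sum.cong refl) (simp add: algebra_simps)

lemma Ig_scale_nu: "Ig \<phi> (\<lambda>y. c * \<nu> y) x = c * Ig \<phi> \<nu> x"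
  unfolding Ig_def sum_distrib_left
  by (intro sum.cong refl) (simp add: algebra_simps)

lemma Ig_scale_phi: "Ig (\<lambda>h. c * \<phi> h) \<nu> x = c * Ig \<phi> \<nu> x"
  unfolding Ig_def sum_distrib_left
  by (intro sum.cong refl) (simp add: algebra_simps)

lemma Ig_cong_nu: "tree_vertex q x \<Longrightarrow> (\<forall>y. tree_vertex q y \<longrightarrow> \<nu> y = \<nu>' y) \<Longrightarrow>
   Ig \<phi> \<nu> x = Ig \<phi> \<nu>' x"
  unfolding Ig_def by (intro sum.cong refl) (auto simp: vertex_drop)

lemma Ig_cong_phi: "(\<And>h. \<phi> h = \<psi> h) \<Longrightarrow> Ig \<phi> \<nu> x = Ig \<psi> \<nu> x"
  unfolding Ig_def by simp

definition phik :: "nat \<Rightarrow> complex \<Rightarrow> nat \<Rightarrow> int \<Rightarrow> complex" where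
  "phik q lam k h = F_fun q lam powi h * of_int h ^ k"

lemma kernel_Ig: "kernel_integral q lam k \<nu> x = Ig (phik q lam k) \<nu> x"
proof -
  define m where "m = length x"
  have inj: "inj_on (\<lambda>i. drop i x) {..m}"
  proof (rule inj_onI)
    fix i j assume "i \<in> {..m}" "j \<in> {..m}" "drop i x = drop j x"
    then have "length (drop i x) = length (drop j x)" by simp
    with \<open>i \<in> {..m}\<close> \<open>j \<in> {..m}\<close> show "i = j" by (simp add: m_def)
  qed
  have gp: "geod_path x = (\<lambda>i. drop i x) ` {..m}"
    unfolding geod_path_def m_def by auto
  have inner: "{y \<in> (\<lambda>i. drop i x) ` {..m}. y \<noteq> [] \<and> tl y = drop i x} =
      (if i = 0 then {} else {drop (i - 1) x})" if "i \<le> m" for i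
  proof -
    have "y \<in> {y \<in> (\<lambda>i. drop i x) ` {..m}. y \<noteq> [] \<and> tl y = drop i x} \<longleftrightarrow> i \<noteq> 0 \<and> y = drop (i - 1) x" for y
    proof
      assume "y \<in> {y \<in> (\<lambda>i. drop i x) ` {..m}. y \<noteq> [] \<and> tl y = drop i x}"
      then obtain j where j: "j \<le> m" "y = drop j x" "y \<noteq> []" "tl y = drop i x"
        by auto
      then have "j < m" by (simp add: m_def)
      have "tl y = drop (Suc j) x" using j by (simp add: drop_Suc tl_drop)
      then have "length (drop (Suc j) x) = length (drop i x)" using j by simp
      then have "Suc j = i" using \<open>j < m\<close> that by (simp add: m_def)
      then show "i \<noteq> 0 \<and> y = drop (i - 1) x" using j by auto
    next
      assume a: "i \<noteq> 0 \<and> y = drop (i - 1) x"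
      then have "y \<noteq> []" using that by (cases i) (auto simp: m_def)
      moreover have "tl y = drop i x" using a by (simp add: tl_drop drop_Suc[symmetric])
      moreover have "y \<in> (\<lambda>i. drop i x) ` {..m}" using a that by auto
      ultimately show "y \<in> {y \<in> (\<lambda>i. drop i x) ` {..m}. y \<noteq> [] \<and> tl y = drop i x}" by simp
    qed
    then show ?thesis by auto
  qed
  have hor: "hor_at x (drop i x) = 2 * int i - int m" if "i \<le> m" for i
    using that unfolding hor_at_def m_def by simp
  show ?thesis
    unfolding kernel_integral_def lc_integral_def Ig_def m_def[symmetric]
    unfolding gp
    apply (subst sum.reindex[OF inj])
    apply (rule sum.cong[OF refl])
    apply (simp only: o_apply)
    apply (subst inner, simp)
    apply (simp add: hor phik_def)
    done
qed


section \<open>Random walk and resolvent on Ig\<close>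

lemma srw_Ig:
  assumes x: "tree_vertex q x" and nu: "is_distribution q \<nu>"
  shows "srw_op q (Ig \<phi> \<nu>) x = Ig (\<lambda>h. (\<phi> (h - 1) + of_nat q * \<phi> (h + 1)) / of_nat (q + 1)) \<nu> x"
proof (cases x)
  case Nil
  have d: "\<nu> [] = (\<Sum>i\<le>q. \<nu> [i])"
    using nu unfolding is_distribution_def by (auto simp: sum_children_Nil tree_vertex_def)
  have "srw_op q (Ig \<phi> \<nu>) [] = (\<Sum>i\<le>q. (\<phi> (- 1) - \<phi> 1) * \<nu> [i] + \<phi> 1 * \<nu> []) / of_nat (q + 1)"
    unfolding srw_op_def sum_neighbours_Nil by (simp add: Ig_Cons Ig_Nil)
  also have "\<dots> = ((\<phi> (- 1) - \<phi> 1) * \<nu> [] + of_nat (q + 1) * \<phi> 1 * \<nu> []) / of_nat (q + 1)"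
    by (simp add: sum.distrib sum_distrib_left[symmetric] d[symmetric])
  also have "\<dots> = Ig (\<lambda>h. (\<phi> (h - 1) + of_nat q * \<phi> (h + 1)) / of_nat (q + 1)) \<nu> []"
    by (simp add: Ig_Nil field_simps)
  finally show ?thesis using Nil by simp
next
  case (Cons a x')
  define m where "m = length x"
  have d: "\<nu> x = (\<Sum>i<q. \<nu> (i # x))"
    using nu x unfolding is_distribution_def by (auto simp: sum_children_Cons Cons)
  have ch: "Ig \<phi> \<nu> (i # x) = (\<phi> (- int m - 1) - \<phi> (1 - int m)) * \<nu> (i # x)
       + Ig (\<lambda>h. \<phi> (h + 1)) \<nu> x" for i
    by (simp add: Ig_Cons m_def)
  have par0: "Ig (\<lambda>h. \<phi> (h - 1)) \<nu> (a # x') = (\<phi> (- int (length x') - 1 - 1) - \<phi> (1 - int (length x') - 1)) * \<nu> (a # x')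
       + Ig \<phi> \<nu> x'"
    by (simp add: Ig_Cons)
  have "- int (length x') - 1 - 1 = - int m - 1" "1 - int (length x') - 1 = 1 - int m"
    by (simp_all add: m_def Cons)
  with par0 have par: "Ig \<phi> \<nu> (tl x) = Ig (\<lambda>h. \<phi> (h - 1)) \<nu> x - (\<phi> (- int m - 1) - \<phi> (1 - int m)) * \<nu> x"
    by (simp add: Cons)
  have "srw_op q (Ig \<phi> \<nu>) x = ((\<Sum>i<q. Ig \<phi> \<nu> (i # x)) + Ig \<phi> \<nu> (tl x)) / of_nat (q + 1)"
    unfolding srw_op_def using Cons by (simp add: sum_neighbours_Cons)
  also have "(\<Sum>i<q. Ig \<phi> \<nu> (i # x)) = (\<phi> (- int m - 1) - \<phi> (1 - int m)) * \<nu> x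
       + of_nat q * Ig (\<lambda>h. \<phi> (h + 1)) \<nu> x"
    unfolding ch by (simp add: sum.distrib sum_distrib_left[symmetric] d[symmetric])
  also have "Ig (\<lambda>h. (\<phi> (h - 1) + of_nat q * \<phi> (h + 1)) / of_nat (q + 1)) \<nu> x
      = (1 / of_nat (q+1)) * Ig (\<lambda>h. \<phi> (h - 1)) \<nu> x + (of_nat q / of_nat (q+1)) * Ig (\<lambda>h. \<phi> (h + 1)) \<nu> x"
    by (subst Ig_lin[symmetric], rule Ig_cong_phi) (simp add: add_divide_distrib)
  ultimately show ?thesis unfolding par by (simp add: add_divide_distrib)
qed

definition Lop :: "nat \<Rightarrow> complex \<Rightarrow> (int \<Rightarrow> complex) \<Rightarrow> int \<Rightarrow> complex" where
  "Lop q lam \<phi> h = lam * \<phi> h - (\<phi> (h - 1) + of_nat q * \<phi> (h + 1)) / of_nat (q + 1)"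

lemma res_Ig:
  assumes x: "tree_vertex q x" and nu: "is_distribution q \<nu>"
  shows "resolvent_op q lam (Ig \<phi> \<nu>) x = Ig (Lop q lam \<phi>) \<nu> x"
proof -
  have "Ig (Lop q lam \<phi>) \<nu> x = lam * Ig \<phi> \<nu> x + (-1) * Ig (\<lambda>h. (\<phi> (h - 1) + of_nat q * \<phi> (h + 1)) / of_nat (q + 1)) \<nu> x"
    unfolding Ig_lin[symmetric] Lop_def by (rule Ig_cong_phi) (simp add: diff_divide_distrib add_divide_distrib)
  then show ?thesis unfolding resolvent_op_def srw_Ig[OF x nu] by simp
qed

lemma res_cong:
  assumes "\<forall>y. tree_vertex q y \<longrightarrow> g y = g' y" "tree_vertex q x"
  shows "resolvent_op q lam g x = resolvent_op q lam g' x"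
  using assms neighbours_vertex[OF assms(2)]
  unfolding resolvent_op_def srw_op_def by (auto intro!: sum.cong)

lemma resn_cong:
  assumes "\<forall>y. tree_vertex q y \<longrightarrow> g y = g' y"
  shows "\<forall>x. tree_vertex q x \<longrightarrow> (resolvent_op q lam ^^ m) g x = (resolvent_op q lam ^^ m) g' x"
  using assms by (induction m) (auto intro: res_cong)

lemma res_sum: "resolvent_op q lam (\<lambda>x. \<Sum>k\<in>K. g k x) = (\<lambda>x. \<Sum>k\<in>K. resolvent_op q lam (g k) x)"
  unfolding resolvent_op_def srw_op_def
  by (auto simp: sum_distrib_left sum_subtractf sum_divide_distrib intro!: ext) (rule sum.swap)

lemma res_diff: "resolvent_op q lam (\<lambda>x. g x - g' x) y = resolvent_op q lam g y - resolvent_op q lam g' y"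
  unfolding resolvent_op_def srw_op_def
  by (simp add: sum_subtractf diff_divide_distrib algebra_simps)

lemma resn_sum: "(resolvent_op q lam ^^ m) (\<lambda>x. \<Sum>k\<in>K. g k x) = (\<lambda>x. \<Sum>k\<in>K. (resolvent_op q lam ^^ m) (g k) x)"
  by (induction m) (simp_all add: res_sum)

lemma resn_Ig:
  assumes nu: "is_distribution q \<nu>"
  shows "\<forall>x. tree_vertex q x \<longrightarrow> (resolvent_op q lam ^^ m) (Ig \<phi> \<nu>) x = Ig ((Lop q lam ^^ m) \<phi>) \<nu> x"
proof (induction m)
  case 0 then show ?case by simp
next
  case (Suc m)
  show ?case
  proof (intro allI impI)
    fix x assume x: "tree_vertex q x"
    have "(resolvent_op q lam ^^ Suc m) (Ig \<phi> \<nu>) x = resolvent_op q lam ((resolvent_op q lam ^^ m) (Ig \<phi> \<nu>)) x"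
      by simp
    also have "\<dots> = resolvent_op q lam (Ig ((Lop q lam ^^ m) \<phi>) \<nu>) x"
      using Suc x by (intro res_cong) auto
    also have "\<dots> = Ig ((Lop q lam ^^ Suc m) \<phi>) \<nu> x"
      using res_Ig[OF x nu] by simp
    finally show "(resolvent_op q lam ^^ Suc m) (Ig \<phi> \<nu>) x = Ig ((Lop q lam ^^ Suc m) \<phi>) \<nu> x" .
  qed
qed


section \<open>Facts about F\<close>

lemma rho_sq: "(spec_radius q)\<^sup>2 = 4 * real q / (real q + 1)\<^sup>2"
  unfolding spec_radius_def by (simp add: power_divide power_mult_distrib)

lemma rho_nonneg: "spec_radius q \<ge> 0"
  unfolding spec_radius_def by simp

lemma F_facts:
  assumes q: "q \<ge> 2" and lam: "lam \<notin> complex_of_real ` {- spec_radius q .. spec_radius q}"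
  shows "lam \<noteq> 0" "F_fun q lam \<noteq> 0"
    "of_nat (q + 1) * lam * F_fun q lam = 1 + of_nat q * (F_fun q lam)\<^sup>2"
    "of_nat q * (F_fun q lam)\<^sup>2 \<noteq> 1" "(F_fun q lam)\<^sup>2 \<noteq> 1"
proof -
  define \<rho> where "\<rho> = spec_radius q"
  define F where "F = F_fun q lam"
  define a where "a = of_nat (q + 1) * lam / of_nat (2 * q)"
  define w where "w = 1 - (complex_of_real \<rho>)\<^sup>2 / lam\<^sup>2"
  define s where "s = csqrt w"
  have Fd: "F = a * (1 - s)" unfolding F_def F_fun_def a_def s_def w_def \<rho>_def by simp
  have s2: "s\<^sup>2 = w" unfolding s_def by simp
  have \<rho>0: "\<rho> \<ge> 0" unfolding \<rho>_def by (rule rho_nonneg)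
  have \<rho>c: "(complex_of_real \<rho>)\<^sup>2 = 4 * of_nat q / (of_nat q + 1)\<^sup>2"
  proof -
    have "(complex_of_real \<rho>)\<^sup>2 = complex_of_real (\<rho>\<^sup>2)" by simp
    also have "\<dots> = complex_of_real (4 * real q / (real q + 1)\<^sup>2)" unfolding \<rho>_def rho_sq ..
    also have "\<dots> = 4 * of_nat q / (of_nat q + 1)\<^sup>2" by simp
    finally show ?thesis .
  qed
  show l0: "lam \<noteq> 0"
  proof
    assume "lam = 0"
    then have "lam \<in> complex_of_real ` {- spec_radius q .. spec_radius q}"
      using rho_nonneg[of q] by (auto intro!: image_eqI[where x=0])
    with lam show False by simp
  qed
  have qc: "(of_nat q :: complex) \<noteq> 0" "(of_nat q + 1 :: complex) \<noteq> 0" using q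
    by (simp, metis add.commute of_nat_Suc of_nat_neq_0)
  have quad: "of_nat (q + 1) * lam * F = 1 + of_nat q * F\<^sup>2"
  proof -
    have "of_nat (q + 1) * lam * F - of_nat q * F\<^sup>2 - 1 = of_nat q * a\<^sup>2 * (1 - s\<^sup>2) - 1"
      unfolding Fd a_def using qc by (simp add: field_simps power2_eq_square)
    also have "\<dots> = 0"
    proof -
      have nz: "lam * (of_nat q * (of_nat q + 1)) \<noteq> 0" using qc l0 by simp
      have nz2: "(2 * lam * of_nat q * (of_nat q + 1))^2 \<noteq> 0" using nz by simp
      show ?thesis
      unfolding s2 w_def \<rho>c a_def using qc l0 nz nz2 by (simp add: field_simps power2_eq_square)
    qed
    finally show ?thesis by (simp add: algebra_simps)
  qed
  then show "of_nat (q + 1) * lam * F_fun q lam = 1 + of_nat q * (F_fun q lam)\<^sup>2"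
    unfolding F_def .
  show F0: "F_fun q lam \<noteq> 0" using quad unfolding F_def[symmetric] by auto
  show "of_nat q * (F_fun q lam)\<^sup>2 \<noteq> 1"
  proof
    assume h: "of_nat q * (F_fun q lam)\<^sup>2 = 1"
    then have h': "of_nat q * F\<^sup>2 = 1" unfolding F_def .
    with quad have e: "(of_nat q + 1) * lam * F = 2" by (simp add: add.commute)
    have "(of_nat q + 1)\<^sup>2 * lam\<^sup>2 * F\<^sup>2 = 4"
      using arg_cong[OF e, of "\<lambda>z. z\<^sup>2"] by (simp add: power_mult_distrib)
    then have "(of_nat q + 1)\<^sup>2 * lam\<^sup>2 * F\<^sup>2 * of_nat q = 4 * of_nat q" by simp
    then have "(of_nat q + 1)\<^sup>2 * lam\<^sup>2 * (of_nat q * F\<^sup>2) = 4 * of_nat q"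
      by (simp add: algebra_simps)
    then have "lam\<^sup>2 = (complex_of_real \<rho>)\<^sup>2" unfolding h' \<rho>c using qc
      by (simp add: field_simps)
    then have "(lam - complex_of_real \<rho>) * (lam + complex_of_real \<rho>) = 0"
      by (simp add: algebra_simps power2_eq_square)
    then have "lam = complex_of_real \<rho> \<or> lam = complex_of_real (- \<rho>)"
      by (auto simp: add_eq_0_iff)
    then have "lam \<in> complex_of_real ` {- spec_radius q .. spec_radius q}"
      using \<rho>0 unfolding \<rho>_def by auto
    with lam show False by simp
  qed
  show "(F_fun q lam)\<^sup>2 \<noteq> 1"
  proof
    assume "(F_fun q lam)\<^sup>2 = 1"
    then have F2: "F\<^sup>2 = 1" unfolding F_def .
    have Fnz: "F \<noteq> 0" using F0 unfolding F_def .
    from quad F2 have "of_nat (q + 1) * (lam * F) = of_nat (q + 1) * 1"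
      by (simp add: algebra_simps)
    then have lF: "lam * F = 1" using qc by (simp del: of_nat_Suc)
    have "lam = lam * (F * F)" using F2 by (simp add: power2_eq_square)
    also have "\<dots> = (lam * F) * F" by (simp add: mult.assoc)
    finally have lamF: "lam = F" using lF by simp
    have \<rho>le: "\<rho>\<^sup>2 \<le> 1"
    proof -
      have "4 * real q \<le> (real q + 1)\<^sup>2"
        using sum_squares_ge_zero[of "real q - 1" 0] by (simp add: power2_eq_square algebra_simps)
      then show ?thesis unfolding \<rho>_def rho_sq by (simp add: field_simps)
    qed
    have "w = complex_of_real (1 - \<rho>\<^sup>2)"
      unfolding w_def using lamF F2 by simp
    then have "s = complex_of_real (sqrt (1 - \<rho>\<^sup>2))"
      unfolding s_def using \<rho>le by (simp add: csqrt_of_real)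
    moreover have "F * (2 * of_nat q) = F * (of_nat (q + 1) * (1 - s))"
      using Fd unfolding a_def lamF using qc by (simp add: field_simps)
    then have "2 * of_nat q = of_nat (q + 1) * (1 - s)" using Fnz by simp
    ultimately have "complex_of_real ((real q + 1) * sqrt (1 - \<rho>\<^sup>2)) = complex_of_real (1 - real q)"
      by (simp add: algebra_simps)
    then have "(real q + 1) * sqrt (1 - \<rho>\<^sup>2) = 1 - real q" by (simp only: of_real_eq_iff)
    moreover have "(real q + 1) * sqrt (1 - \<rho>\<^sup>2) \<ge> 0" using \<rho>le by simp
    ultimately show False using q by simp
  qed
qed


section \<open>Harmonic case\<close>

lemma phi0_shift: "F_fun q lam \<noteq> 0 \<Longrightarrow> phik q lam 0 (h + 1) = F_fun q lam * phik q lam 0 h"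
  unfolding phik_def by (simp add: power_int_add_1')

lemma phi0_coef: "F_fun q lam \<noteq> 0 \<Longrightarrow>
  phik q lam 0 (- int m - 1) - phik q lam 0 (1 - int m) = F_fun q lam powi (- int (Suc m)) * (1 - (F_fun q lam)\<^sup>2)"
proof -
  assume F: "F_fun q lam \<noteq> 0"
  have e: "1 - int m = (- int (Suc m)) + 2" by simp
  have "F_fun q lam powi (1 - int m) = F_fun q lam powi ((- int (Suc m)) + 2)" by (simp only: e)
  also have "\<dots> = F_fun q lam powi (- int (Suc m)) * F_fun q lam powi 2"
    using F by (intro power_int_add) simp
  finally have "F_fun q lam powi (1 - int m) = F_fun q lam powi (- int (Suc m)) * (F_fun q lam)\<^sup>2"
    by simp
  moreover have "phik q lam 0 (- int m - 1) = F_fun q lam powi (- int (Suc m))"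
    unfolding phik_def power_0 mult_1_right by (rule arg_cong[where f="power_int (F_fun q lam)"]) simp
  moreover have "phik q lam 0 (1 - int m) = F_fun q lam powi (1 - int m)"
    unfolding phik_def by simp
  ultimately show ?thesis by (simp only:) (simp add: algebra_simps)
qed

lemma Ig_phi0_Cons: "F_fun q lam \<noteq> 0 \<Longrightarrow> Ig (phik q lam 0) \<nu> (a # x) =
   F_fun q lam powi (- int (Suc (length x))) * (1 - (F_fun q lam)\<^sup>2) * \<nu> (a # x) + F_fun q lam * Ig (phik q lam 0) \<nu> x"
  by (simp add: Ig_Cons phi0_coef phi0_shift Ig_scale_phi)

lemma Ig_phi0_Nil: "Ig (phik q lam 0) \<nu> [] = \<nu> []"
  by (simp add: Ig_Nil phik_def)

lemma harm_unique:
  assumes q: "q \<ge> 2" and lam: "lam \<notin> complex_of_real ` {- spec_radius q .. spec_radius q}"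
    and z: "\<forall>x. tree_vertex q x \<longrightarrow> Ig (phik q lam 0) \<nu> x = 0"
  shows "\<forall>x. tree_vertex q x \<longrightarrow> \<nu> x = 0"
proof (intro allI impI)
  fix y assume y: "tree_vertex q y"
  note FF = F_facts[OF q lam]
  show "\<nu> y = 0"
  proof (cases y)
    case Nil then show ?thesis using z[rule_format, of "[]"] y by (simp add: Ig_phi0_Nil)
  next
    case (Cons a x)
    have x: "tree_vertex q x" using vertex_tl[OF y] Cons by simp
    have "F_fun q lam powi (- int (Suc (length x))) * (1 - (F_fun q lam)\<^sup>2) * \<nu> y = 0"
      using z y x Ig_phi0_Cons[OF FF(2), of \<nu> a x] Cons by simp
    moreover have "F_fun q lam powi (- int (Suc (length x))) \<noteq> 0" using FF(2) by simp
    moreover have "1 - (F_fun q lam)\<^sup>2 \<noteq> 0" using FF(5) by simp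
    ultimately show ?thesis by simp
  qed
qed

lemma harm_exists:
  assumes q: "q \<ge> 2" and lam: "lam \<notin> complex_of_real ` {- spec_radius q .. spec_radius q}"
    and h: "\<forall>x. tree_vertex q x \<longrightarrow> resolvent_op q lam f x = 0"
  shows "\<exists>\<nu>. is_distribution q \<nu> \<and> (\<forall>x. tree_vertex q x \<longrightarrow> f x = Ig (phik q lam 0) \<nu> x)"
proof -
  note FF = F_facts[OF q lam]
  define F where "F = F_fun q lam"
  have Fnz: "F \<noteq> 0" and F2: "1 - F\<^sup>2 \<noteq> 0" and quad: "of_nat (q + 1) * lam * F = 1 + of_nat q * F\<^sup>2"
    using FF unfolding F_def by auto
  define \<nu> where "\<nu> y = (if y = [] then f [] else (f y - F * f (tl y)) / (F powi (- int (length y)) * (1 - F\<^sup>2)))" for y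
  have qc: "(of_nat q + 1 :: complex) \<noteq> 0" by (metis add.commute of_nat_Suc of_nat_neq_0)
  have harm: "of_nat (q + 1) * lam * f x = (\<Sum>y\<in>tree_neighbours q x. f y)" if "tree_vertex q x" for x
  proof -
    have "lam * f x - (\<Sum>y\<in>tree_neighbours q x. f y) / of_nat (q + 1) = 0"
      using h that unfolding resolvent_op_def srw_op_def by simp
    then show ?thesis using qc by (simp add: field_simps)
  qed
  have rep: "tree_vertex q x \<longrightarrow> f x = Ig (phik q lam 0) \<nu> x" for x
  proof (induction x)
    case Nil then show ?case by (simp add: Ig_phi0_Nil \<nu>_def)
  next
    case (Cons a x)
    show ?case
    proof
      assume v: "tree_vertex q (a # x)"
      then have "tree_vertex q x" using vertex_tl[OF v] by simp
      then have ih: "f x = Ig (phik q lam 0) \<nu> x" using Cons by simp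
      have pz: "F powi (- int (Suc (length x))) \<noteq> 0" using Fnz by simp
      show "f (a # x) = Ig (phik q lam 0) \<nu> (a # x)"
        unfolding Ig_phi0_Cons[OF FF(2)] F_def[symmetric] ih[symmetric]
        using pz F2 by (simp add: \<nu>_def)
    qed
  qed
  have dist: "is_distribution q \<nu>"
    unfolding is_distribution_def
  proof (intro allI impI)
    fix x assume v: "tree_vertex q x"
    show "\<nu> x = (\<Sum>y\<in>tree_children q x. \<nu> y)"
    proof (cases x)
      case Nil
      have hs: "(\<Sum>i\<le>q. f [i]) = of_nat (q + 1) * lam * f []"
        using harm[OF v] Nil by (simp add: sum_neighbours_Nil)
      have "(\<Sum>y\<in>tree_children q x. \<nu> y) = (\<Sum>i\<le>q. (f [i] - F * f []) / (inverse F * (1 - F\<^sup>2)))"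
        using Nil by (simp add: sum_children_Nil \<nu>_def power_int_minus)
      also have "\<dots> = ((\<Sum>i\<le>q. f [i]) - of_nat (q + 1) * (F * f [])) / (inverse F * (1 - F\<^sup>2))"
        by (simp add: sum_divide_distrib[symmetric] sum_subtractf)
      also have "\<dots> = (of_nat (q + 1) * lam * F - of_nat (q + 1) * F\<^sup>2) * f [] / (1 - F\<^sup>2)"
        unfolding hs using Fnz F2 by (simp add: field_simps power2_eq_square)
      also have "\<dots> = f []" unfolding quad using F2 by (simp add: field_simps)
      finally show ?thesis using Nil by (simp add: \<nu>_def)
    next
      case (Cons a x')
      define m where "m = length x"
      define P where "P = F powi (- int (Suc m))"
      have Pnz: "P \<noteq> 0" unfolding P_def using Fnz by simp
      have PF: "F powi (- int m) = P * F"
      proof -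
        have e: "- int m = - int (Suc m) + 1" by simp
        have "F powi (- int m) = F powi (- int (Suc m) + 1)" by (simp only: e)
        also have "\<dots> = P * F" unfolding P_def using Fnz by (intro power_int_add_1) simp
        finally show ?thesis .
      qed
      have hs: "(\<Sum>i<q. f (i # x)) = of_nat (q + 1) * lam * f x - f (tl x)"
        using harm[OF v] Cons by (simp add: sum_neighbours_Cons)
      have "(\<Sum>y\<in>tree_children q x. \<nu> y) = (\<Sum>i<q. (f (i # x) - F * f x) / (P * (1 - F\<^sup>2)))"
        using Cons by (simp add: sum_children_Cons \<nu>_def P_def m_def)
      also have "\<dots> = ((\<Sum>i<q. f (i # x)) - of_nat q * (F * f x)) / (P * (1 - F\<^sup>2))"
        by (simp add: sum_divide_distrib[symmetric] sum_subtractf)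
      also have "\<dots> = ((of_nat (q + 1) * lam * F - of_nat q * F\<^sup>2) * f x - F * f (tl x)) / (P * F * (1 - F\<^sup>2))"
        unfolding hs using Fnz F2 Pnz by (simp add: field_simps power2_eq_square)
      also have "\<dots> = \<nu> x"
      proof -
        have xn: "x \<noteq> []" using Cons by simp
        have "\<nu> x = (f x - F * f (tl x)) / (F powi (- int m) * (1 - F\<^sup>2))"
          unfolding \<nu>_def m_def using xn by simp
        then show ?thesis unfolding quad PF by (simp add: algebra_simps)
      qed
      finally show ?thesis by simp
    qed
  qed
  show ?thesis using dist rep by blast
qed


section \<open>The operator L on phik\<close>

definition cc :: "nat \<Rightarrow> complex \<Rightarrow> nat \<Rightarrow> nat \<Rightarrow> complex" where
  "cc q lam k j = of_nat (k choose j) * (- ((-1) ^ (k - j)) / F_fun q lam - of_nat q * F_fun q lam) / of_nat (q + 1)"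

definition inW :: "nat \<Rightarrow> complex \<Rightarrow> nat \<Rightarrow> (int \<Rightarrow> complex) \<Rightarrow> bool" where
  "inW q lam k \<psi> \<longleftrightarrow> (\<exists>a. \<psi> = (\<lambda>h. \<Sum>j<k. a j * phik q lam j h))"

lemma Lop_lin: "Lop q lam (\<lambda>h. a * \<psi> h + b * \<psi>' h) = (\<lambda>h. a * Lop q lam \<psi> h + b * Lop q lam \<psi>' h)"
  unfolding Lop_def by (rule ext) (simp add: algebra_simps add_divide_distrib diff_divide_distrib)

lemma Lop_sum: "Lop q lam (\<lambda>h. \<Sum>j\<in>J. g j h) = (\<lambda>h. \<Sum>j\<in>J. Lop q lam (g j) h)"
  unfolding Lop_def
  by (rule ext) (simp add: sum_distrib_left sum_subtractf sum.distrib sum_divide_distrib add_divide_distrib)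

lemma Lop_zero: "Lop q lam (\<lambda>h. 0) = (\<lambda>h. 0)"
  unfolding Lop_def by simp

lemma inW_zero: "inW q lam k (\<lambda>h. 0)"
  unfolding inW_def by (rule exI[where x="\<lambda>j. 0"]) simp

lemma inW_lin: "inW q lam k \<psi> \<Longrightarrow> inW q lam k \<psi>' \<Longrightarrow> inW q lam k (\<lambda>h. c * \<psi> h + d * \<psi>' h)"
  unfolding inW_def
proof (elim exE)
  fix a b assume "\<psi> = (\<lambda>h. \<Sum>j<k. a j * phik q lam j h)" "\<psi>' = (\<lambda>h. \<Sum>j<k. b j * phik q lam j h)"
  then show "\<exists>e. (\<lambda>h. c * \<psi> h + d * \<psi>' h) = (\<lambda>h. \<Sum>j<k. e j * phik q lam j h)"
    by (intro exI[where x="\<lambda>j. c * a j + d * b j"])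
      (simp add: sum_distrib_left sum.distrib algebra_simps)
qed

lemma inW_phik: "j < k \<Longrightarrow> inW q lam k (\<lambda>h. c * phik q lam j h)"
  unfolding inW_def
proof (intro exI[where x="\<lambda>i. if i = j then c else 0"] ext)
  fix h assume j: "j < k"
  have "(\<Sum>i<k. (if i = j then c else 0) * phik q lam i h) = (\<Sum>i<k. if i = j then c * phik q lam i h else 0)"
    by (rule sum.cong) auto
  also have "\<dots> = c * phik q lam j h" using j by (simp add: sum.delta')
  finally show "c * phik q lam j h = (\<Sum>i<k. (if i = j then c else 0) * phik q lam i h)" by simp
qed

lemma inW_sum: "finite J \<Longrightarrow> (\<And>j. j \<in> J \<Longrightarrow> inW q lam k (g j)) \<Longrightarrow> inW q lam k (\<lambda>h. \<Sum>j\<in>J. g j h)"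
proof (induction J rule: finite_induct)
  case empty then show ?case using inW_zero by simp
next
  case (insert j J)
  have "inW q lam k (\<lambda>h. 1 * g j h + 1 * (\<Sum>i\<in>J. g i h))"
    using insert by (intro inW_lin) auto
  then show ?case using insert by simp
qed

lemma Lopn_lin: "(Lop q lam ^^ m) (\<lambda>h. a * \<psi> h + \<psi>' h) = (\<lambda>h. a * (Lop q lam ^^ m) \<psi> h + (Lop q lam ^^ m) \<psi>' h)"
proof (induction m)
  case 0 then show ?case by simp
next
  case (Suc m)
  show ?case using Lop_lin[of q lam a "(Lop q lam ^^ m) \<psi>" 1 "(Lop q lam ^^ m) \<psi>'"] by (simp add: Suc)
qed

locale tsetting =
  fixes q :: nat and lam :: complex
  assumes q: "q \<ge> 2" and lam: "lam \<notin> complex_of_real ` {- spec_radius q .. spec_radius q}"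
begin

lemma mult_neq_0: "(a::complex) \<noteq> 0 \<Longrightarrow> b \<noteq> 0 \<Longrightarrow> a * b \<noteq> 0" by simp

lemma Fnz: "F_fun q lam \<noteq> 0" using F_facts[OF q lam] by simp

lemma Lop_phik: "Lop q lam (phik q lam k) = (\<lambda>h. \<Sum>j<k. cc q lam k j * phik q lam j h)"
proof
  fix h
  define F where "F = F_fun q lam"
  define E where "E = F powi h"
  define t where "t = (of_int h :: complex)"
  have F0: "F \<noteq> 0" using Fnz unfolding F_def .
  have quad: "of_nat (q + 1) * lam * F = 1 + of_nat q * F\<^sup>2"
    using F_facts[OF q lam] unfolding F_def by simp
  have qc: "(of_nat q + 1 :: complex) \<noteq> 0" by (metis add.commute of_nat_Suc of_nat_neq_0)
  have nz: "(of_nat q + 1) * F \<noteq> 0" using qc F0 by simp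
  have "lam * ((of_nat q + 1) * F) = 1 + of_nat q * F\<^sup>2" using quad by (simp add: algebra_simps)
  then have lamE: "lam = (1 + of_nat q * F\<^sup>2) / ((of_nat q + 1) * F)"
    by (simp add: nonzero_eq_divide_eq[OF nz])
  have m1: "phik q lam k (h - 1) = E / F * (t - 1) ^ k"
    unfolding phik_def E_def t_def F_def[symmetric] using F0 by (simp add: power_int_diff)
  have p1: "phik q lam k (h + 1) = E * F * (t + 1) ^ k"
    unfolding phik_def E_def t_def F_def[symmetric] using F0 by (simp add: power_int_add_1)
  have p0: "phik q lam j h = E * t ^ j" for j
    unfolding phik_def E_def t_def F_def[symmetric] by simp
  have bp: "(t + 1) ^ k = (\<Sum>j<k. of_nat (k choose j) * t ^ j) + t ^ k"
  proof -
    have "(t + 1) ^ k = (\<Sum>j\<le>k. of_nat (k choose j) * t ^ j * 1 ^ (k - j))"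
      by (rule binomial_ring)
    also have "\<dots> = (\<Sum>j<k. of_nat (k choose j) * t ^ j) + t ^ k"
      by (simp add: lessThan_Suc_atMost[symmetric])
    finally show ?thesis .
  qed
  have bm: "(t - 1) ^ k = (\<Sum>j<k. of_nat (k choose j) * t ^ j * (-1) ^ (k - j)) + t ^ k"
  proof -
    have "(t - 1) ^ k = (t + (-1)) ^ k" by simp
    also have "\<dots> = (\<Sum>j\<le>k. of_nat (k choose j) * t ^ j * (-1) ^ (k - j))"
      by (rule binomial_ring)
    also have "\<dots> = (\<Sum>j<k. of_nat (k choose j) * t ^ j * (-1) ^ (k - j)) + t ^ k"
      by (simp add: lessThan_Suc_atMost[symmetric])
    finally show ?thesis .
  qed
  have "Lop q lam (phik q lam k) h = E / (of_nat q + 1) *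
      ((1 / F + of_nat q * F) * t ^ k - (t - 1) ^ k / F - of_nat q * F * (t + 1) ^ k)"
  proof -
    have a: "lam * (E * t ^ k) = E / (of_nat q + 1) * ((1 / F + of_nat q * F) * t ^ k)"
      unfolding lamE using F0 qc nz by (simp add: field_simps power2_eq_square)
    have b: "(E / F * (t - 1) ^ k + of_nat q * (E * F * (t + 1) ^ k)) / of_nat (q + 1)
        = E / (of_nat q + 1) * ((t - 1) ^ k / F + of_nat q * F * (t + 1) ^ k)"
      using F0 qc by (simp add: field_simps)
    show ?thesis unfolding Lop_def m1 p1 p0 a b by (simp add: algebra_simps)
  qed
  also have "\<dots> = E / (of_nat q + 1) * (\<Sum>j<k. of_nat (k choose j) * t ^ j *
      (- ((-1) ^ (k - j)) / F - of_nat q * F))"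
    unfolding bp bm
    by (simp add: sum_divide_distrib sum_distrib_left sum_subtractf sum_negf sum.distrib algebra_simps
        diff_divide_distrib add_divide_distrib)
  also have "\<dots> = (\<Sum>j<k. cc q lam k j * phik q lam j h)"
    unfolding cc_def p0 F_def[symmetric] sum_distrib_left
    by (rule sum.cong[OF refl]) (use F0 qc nz in \<open>simp add: field_simps\<close>)
  finally show "Lop q lam (phik q lam k) h = (\<Sum>j<k. cc q lam k j * phik q lam j h)" .
qed

lemma cc_top: "cc q lam (Suc k) k \<noteq> 0"
proof -
  define F where "F = F_fun q lam"
  have F0: "F \<noteq> 0" using Fnz unfolding F_def .
  have h: "of_nat q * F\<^sup>2 \<noteq> 1" using F_facts[OF q lam] unfolding F_def by simp
  have qc: "(of_nat q + 1 :: complex) \<noteq> 0" by (metis add.commute of_nat_Suc of_nat_neq_0)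
  have "1 / F - of_nat q * F \<noteq> 0"
  proof
    assume "1 / F - of_nat q * F = 0"
    then have "F * (1 / F - of_nat q * F) = 0" by simp
    then have "1 - of_nat q * F\<^sup>2 = 0" using F0 by (simp add: algebra_simps power2_eq_square)
    with h show False by simp
  qed
  moreover have "(1 + of_nat k :: complex) \<noteq> 0" "(1 + of_nat q :: complex) \<noteq> 0"
    by (metis of_nat_Suc of_nat_neq_0)+
  ultimately show ?thesis unfolding cc_def F_def[symmetric] by simp
qed

lemma Lop_phik_0: "Lop q lam (phik q lam 0) = (\<lambda>h. 0)"
  by (simp add: Lop_phik)

definition rr :: "nat \<Rightarrow> int \<Rightarrow> complex" where
  "rr k = (\<lambda>h. \<Sum>j<k. cc q lam (Suc k) j * phik q lam j h)"

lemma rr_W: "inW q lam k (rr k)"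
  unfolding inW_def rr_def by blast

lemma Lop_phik_Suc: "Lop q lam (phik q lam (Suc k)) = (\<lambda>h. cc q lam (Suc k) k * phik q lam k h + rr k h)"
  by (simp add: Lop_phik rr_def add.commute)

lemma Lop_scale: "Lop q lam (\<lambda>h. c * \<psi> h) = (\<lambda>h. c * Lop q lam \<psi> h)"
  unfolding Lop_def by (rule ext) (simp add: algebra_simps diff_divide_distrib add_divide_distrib)

lemma inW_scale: "inW q lam k \<psi> \<Longrightarrow> inW q lam k (\<lambda>h. c * \<psi> h)"
  using inW_lin[of q lam k \<psi> \<psi> c 0] by simp

lemma phik_W: "j < k \<Longrightarrow> inW q lam k (phik q lam j)"
  using inW_phik[of j k q lam 1] by simp

lemma inW_mono: "inW q lam k \<psi> \<Longrightarrow> k \<le> k' \<Longrightarrow> inW q lam k' \<psi>"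
  unfolding inW_def[of q lam k]
  by (elim exE, simp only:, rule inW_sum) (auto intro: inW_phik)

lemma Lop_phik_W: "j \<le> k \<Longrightarrow> inW q lam k (Lop q lam (phik q lam j))"
  unfolding Lop_phik by (rule inW_sum) (auto intro: inW_phik)

lemma Lop_W: "inW q lam (Suc k) \<psi> \<Longrightarrow> inW q lam k (Lop q lam \<psi>)"
  unfolding inW_def[of q lam "Suc k"]
  by (elim exE, simp only: Lop_sum Lop_scale, rule inW_sum)
    (auto intro!: inW_scale Lop_phik_W)

lemma Lop_surj: "inW q lam k \<psi> \<Longrightarrow> \<exists>\<psi>'. inW q lam (Suc k) \<psi>' \<and> Lop q lam \<psi>' = \<psi>"
proof (induction k arbitrary: \<psi>)
  case 0
  then have "\<psi> = (\<lambda>h. 0)" unfolding inW_def by auto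
  then show ?case using inW_zero Lop_zero by metis
next
  case (Suc k)
  then obtain a where a: "\<psi> = (\<lambda>h. \<Sum>j<Suc k. a j * phik q lam j h)" unfolding inW_def by blast
  define \<psi>0 where "\<psi>0 = (\<lambda>h. \<Sum>j<k. a j * phik q lam j h)"
  have \<psi>0W: "inW q lam k \<psi>0" unfolding inW_def \<psi>0_def by blast
  have \<psi>e: "\<psi> = (\<lambda>h. a k * phik q lam k h + \<psi>0 h)" unfolding a \<psi>0_def by (simp add: add.commute)
  define c where "c = cc q lam (Suc k) k"
  have c0: "c \<noteq> 0" unfolding c_def by (rule cc_top)
  define \<tau> where "\<tau> = (\<lambda>h. 1 * \<psi>0 h + (- (a k / c)) * rr k h)"
  have "inW q lam k \<tau>" unfolding \<tau>_def by (intro inW_lin \<psi>0W rr_W)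
  then obtain \<psi>'' where \<psi>'': "inW q lam (Suc k) \<psi>''" "Lop q lam \<psi>'' = \<tau>" using Suc.IH by blast
  define \<psi>' where "\<psi>' = (\<lambda>h. (a k / c) * phik q lam (Suc k) h + 1 * \<psi>'' h)"
  have "inW q lam (Suc (Suc k)) \<psi>'"
    unfolding \<psi>'_def by (intro inW_lin phik_W inW_mono[OF \<psi>''(1)]) auto
  moreover have "Lop q lam \<psi>' = \<psi>"
    unfolding \<psi>'_def Lop_lin \<psi>''(2) Lop_phik_Suc \<psi>e \<tau>_def c_def[symmetric]
    using c0 by (auto simp: field_simps)
  ultimately show ?case by blast
qed

lemma Lopn_zero: "(Lop q lam ^^ m) (\<lambda>h. 0) = (\<lambda>h. 0)"
  by (induction m) (simp_all add: Lop_zero)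

lemma Lopn_W: "inW q lam k \<psi> \<Longrightarrow> (Lop q lam ^^ k) \<psi> = (\<lambda>h. 0)"
proof (induction k arbitrary: \<psi>)
  case 0 then show ?case unfolding inW_def by auto
next
  case (Suc k)
  have "(Lop q lam ^^ Suc k) \<psi> = (Lop q lam ^^ k) (Lop q lam \<psi>)"
    by (simp add: funpow_Suc_right del: funpow.simps)
  then show ?case using Suc.IH[OF Lop_W[OF Suc.prems]] by simp
qed

lemma Lopn_phik: "\<exists>C. C \<noteq> 0 \<and> (Lop q lam ^^ k) (phik q lam k) = (\<lambda>h. C * phik q lam 0 h)"
proof (induction k)
  case 0 then show ?case by (intro exI[where x=1]) simp
next
  case (Suc k)
  then obtain C where C: "C \<noteq> 0" "(Lop q lam ^^ k) (phik q lam k) = (\<lambda>h. C * phik q lam 0 h)" by blast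
  have "(Lop q lam ^^ Suc k) (phik q lam (Suc k)) = (Lop q lam ^^ k) (Lop q lam (phik q lam (Suc k)))"
    by (simp add: funpow_Suc_right del: funpow.simps)
  also have "\<dots> = (\<lambda>h. (cc q lam (Suc k) k * C) * phik q lam 0 h)"
    unfolding Lop_phik_Suc Lopn_lin C(2) Lopn_W[OF rr_W] by (simp add: mult.assoc)
  finally show ?case using C(1) cc_top[of k] by (intro exI[where x="cc q lam (Suc k) k * C"]) simp
qed

lemma dist_lin: "is_distribution q \<nu> \<Longrightarrow> is_distribution q \<nu>' \<Longrightarrow>
    is_distribution q (\<lambda>y. c * \<nu> y + d * \<nu>' y)"
  unfolding is_distribution_def by (simp add: sum.distrib sum_distrib_left)

lemma dist_scale: "is_distribution q \<nu> \<Longrightarrow> is_distribution q (\<lambda>y. c * \<nu> y)"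
  unfolding is_distribution_def by (simp add: sum_distrib_left)

lemma dist_diff: "is_distribution q \<nu> \<Longrightarrow> is_distribution q \<nu>' \<Longrightarrow>
    is_distribution q (\<lambda>y. \<nu> y - \<nu>' y)"
  unfolding is_distribution_def by (simp add: sum_subtractf)

lemma dist_zero: "is_distribution q (\<lambda>y. 0)"
  unfolding is_distribution_def by simp

lemma res_zero: "resolvent_op q lam (\<lambda>x. 0) = (\<lambda>x. 0)"
  unfolding resolvent_op_def srw_op_def by simp

lemma resn_zero: "(resolvent_op q lam ^^ m) (\<lambda>x. 0) = (\<lambda>x. 0)"
  by (induction m) (simp_all add: res_zero)

lemma uniq: "(\<forall>k<n. is_distribution q (\<delta> k)) \<Longrightarrow>
   (\<forall>x. tree_vertex q x \<longrightarrow> (\<Sum>k<n. Ig (phik q lam k) (\<delta> k) x) = 0) \<Longrightarrow>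
   (\<forall>k<n. \<forall>x. tree_vertex q x \<longrightarrow> \<delta> k x = 0)"
proof (induction n)
  case 0 then show ?case by simp
next
  case (Suc n)
  define G where "G = (\<lambda>x. \<Sum>k<Suc n. Ig (phik q lam k) (\<delta> k) x)"
  obtain C where C: "C \<noteq> 0" "(Lop q lam ^^ n) (phik q lam n) = (\<lambda>h. C * phik q lam 0 h)"
    using Lopn_phik by blast
  have top: "\<forall>x. tree_vertex q x \<longrightarrow> \<delta> n x = 0"
  proof (rule harm_unique[OF q lam], intro allI impI)
    fix x assume x: "tree_vertex q x"
    have "(resolvent_op q lam ^^ n) G x = (resolvent_op q lam ^^ n) (\<lambda>x. 0) x"
      using resn_cong[where g=G and g'="\<lambda>x. 0" and m=n and lam=lam] Suc.prems(2) x unfolding G_def by simp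
    then have z: "(resolvent_op q lam ^^ n) G x = 0" by (simp add: resn_zero)
    have "(resolvent_op q lam ^^ n) G x = (\<Sum>k<Suc n. (resolvent_op q lam ^^ n) (Ig (phik q lam k) (\<delta> k)) x)"
      unfolding G_def resn_sum ..
    also have "\<dots> = (\<Sum>k<Suc n. Ig ((Lop q lam ^^ n) (phik q lam k)) (\<delta> k) x)"
      using resn_Ig Suc.prems(1) x by (intro sum.cong refl) auto
    also have "\<dots> = Ig ((Lop q lam ^^ n) (phik q lam n)) (\<delta> n) x"
      using Lopn_W[OF phik_W] by (simp add: Ig_zero)
    also have "\<dots> = C * Ig (phik q lam 0) (\<delta> n) x" unfolding C(2) Ig_scale_phi ..
    finally show "Ig (phik q lam 0) (\<delta> n) x = 0" using z C(1) by simp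
  qed
  have "\<forall>x. tree_vertex q x \<longrightarrow> (\<Sum>k<n. Ig (phik q lam k) (\<delta> k) x) = 0"
  proof (intro allI impI)
    fix x assume x: "tree_vertex q x"
    have "Ig (phik q lam n) (\<delta> n) x = Ig (phik q lam n) (\<lambda>y. 0) x"
      using top x by (intro Ig_cong_nu) auto
    then show "(\<Sum>k<n. Ig (phik q lam k) (\<delta> k) x) = 0"
      using Suc.prems(2)[rule_format, OF x] by (simp add: Ig_zero_nu)
  qed
  then have "\<forall>k<n. \<forall>x. tree_vertex q x \<longrightarrow> \<delta> k x = 0" using Suc by simp
  then show ?case using top less_Suc_eq by auto
qed

definition repr :: "nat \<Rightarrow> (nat list \<Rightarrow> complex) \<Rightarrow> bool" where
  "repr n g \<longleftrightarrow> (\<exists>\<mu>. (\<forall>k<n. is_distribution q (\<mu> k)) \<and>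
      (\<forall>x. tree_vertex q x \<longrightarrow> g x = (\<Sum>k<n. Ig (phik q lam k) (\<mu> k) x)))"

lemma repr_zero: "repr n (\<lambda>x. 0)"
  unfolding repr_def using dist_zero by (intro exI[where x="\<lambda>k y. 0"]) (simp add: Ig_zero_nu)

lemma repr_add: "repr n g \<Longrightarrow> repr n g' \<Longrightarrow> repr n (\<lambda>x. g x + g' x)"
  unfolding repr_def
proof (elim exE conjE)
  fix \<mu> \<mu>' assume a: "\<forall>k<n. is_distribution q (\<mu> k)" "\<forall>x. tree_vertex q x \<longrightarrow> g x = (\<Sum>k<n. Ig (phik q lam k) (\<mu> k) x)"
    and b: "\<forall>k<n. is_distribution q (\<mu>' k)" "\<forall>x. tree_vertex q x \<longrightarrow> g' x = (\<Sum>k<n. Ig (phik q lam k) (\<mu>' k) x)"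
  show "\<exists>\<mu>''. (\<forall>k<n. is_distribution q (\<mu>'' k)) \<and>
      (\<forall>x. tree_vertex q x \<longrightarrow> g x + g' x = (\<Sum>k<n. Ig (phik q lam k) (\<mu>'' k) x))"
  proof (intro exI[where x="\<lambda>k y. \<mu> k y + \<mu>' k y"] conjI allI impI)
    fix k assume "k < n"
    then show "is_distribution q (\<lambda>y. \<mu> k y + \<mu>' k y)"
      using dist_lin[of "\<mu> k" "\<mu>' k" 1 1] a b by simp
  next
    fix x assume "tree_vertex q x"
    then show "g x + g' x = (\<Sum>k<n. Ig (phik q lam k) (\<lambda>y. \<mu> k y + \<mu>' k y) x)"
      using a b by (simp add: Ig_add_nu sum.distrib)
  qed
qed

lemma repr_cong: "repr n g \<Longrightarrow> (\<forall>x. tree_vertex q x \<longrightarrow> g' x = g x) \<Longrightarrow> repr n g'"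
  unfolding repr_def by auto

lemma repr_sum: "finite J \<Longrightarrow> (\<And>j. j \<in> J \<Longrightarrow> repr n (g j)) \<Longrightarrow> repr n (\<lambda>x. \<Sum>j\<in>J. g j x)"
proof (induction J rule: finite_induct)
  case empty then show ?case using repr_zero by simp
next
  case (insert j J)
  then show ?case using repr_add[of n "g j" "\<lambda>x. \<Sum>j\<in>J. g j x"] by simp
qed

lemma repr_Ig: "inW q lam n \<psi> \<Longrightarrow> is_distribution q \<nu> \<Longrightarrow> repr n (Ig \<psi> \<nu>)"
proof -
  assume "inW q lam n \<psi>" and nu: "is_distribution q \<nu>"
  then obtain a where a: "\<psi> = (\<lambda>h. \<Sum>j<n. a j * phik q lam j h)" unfolding inW_def by blast
  show ?thesis unfolding repr_def
  proof (intro exI[where x="\<lambda>k y. a k * \<nu> y"] conjI allI impI)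
    fix k assume "k < n" then show "is_distribution q (\<lambda>y. a k * \<nu> y)" using dist_scale[OF nu] by simp
  next
    fix x assume "tree_vertex q x"
    show "Ig \<psi> \<nu> x = (\<Sum>k<n. Ig (phik q lam k) (\<lambda>y. a k * \<nu> y) x)"
      unfolding a Ig_sum Ig_scale_phi Ig_scale_nu ..
  qed
qed

lemma exist: "polyharmonic q lam (Suc n) f \<Longrightarrow> repr (Suc n) f"
proof (induction n arbitrary: f)
  case 0
  then have "\<forall>x. tree_vertex q x \<longrightarrow> resolvent_op q lam f x = 0" unfolding polyharmonic_def by simp
  then obtain \<nu> where \<nu>: "is_distribution q \<nu>" "\<forall>x. tree_vertex q x \<longrightarrow> f x = Ig (phik q lam 0) \<nu> x"
    using harm_exists[OF q lam] by blast
  show ?case unfolding repr_def using \<nu> by (intro exI[where x="\<lambda>k. \<nu>"]) simp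
next
  case (Suc n)
  define g where "g = resolvent_op q lam f"
  have "polyharmonic q lam (Suc n) g"
    using Suc.prems unfolding polyharmonic_def g_def
    by (simp only: funpow_Suc_right[of _ "resolvent_op q lam"] o_apply)
  then obtain \<mu> where \<mu>: "\<forall>k<Suc n. is_distribution q (\<mu> k)"
      "\<forall>x. tree_vertex q x \<longrightarrow> g x = (\<Sum>k<Suc n. Ig (phik q lam k) (\<mu> k) x)"
    using Suc.IH unfolding repr_def by blast
  have "\<forall>k. \<exists>\<psi>'. k < Suc n \<longrightarrow> inW q lam (Suc (Suc n)) \<psi>' \<and> Lop q lam \<psi>' = phik q lam k"
    using Lop_surj[OF phik_W] by blast
  then obtain \<Psi> where \<Psi>: "\<And>k. k < Suc n \<Longrightarrow> inW q lam (Suc (Suc n)) (\<Psi> k) \<and> Lop q lam (\<Psi> k) = phik q lam k"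
    by metis
  define hh where "hh = (\<lambda>x. \<Sum>k<Suc n. Ig (\<Psi> k) (\<mu> k) x)"
  have rh: "repr (Suc (Suc n)) hh"
    unfolding hh_def using \<Psi> \<mu> by (intro repr_sum repr_Ig) auto
  have res_hh: "resolvent_op q lam hh x = g x" if x: "tree_vertex q x" for x
  proof -
    have "resolvent_op q lam hh x = (\<Sum>k<Suc n. resolvent_op q lam (Ig (\<Psi> k) (\<mu> k)) x)"
      unfolding hh_def res_sum ..
    also have "\<dots> = (\<Sum>k<Suc n. Ig (phik q lam k) (\<mu> k) x)"
      using res_Ig[OF x] \<mu> \<Psi> by (intro sum.cong refl) auto
    finally show ?thesis using \<mu> x by simp
  qed
  have "\<forall>x. tree_vertex q x \<longrightarrow> resolvent_op q lam (\<lambda>x. f x - hh x) x = 0"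
    using res_hh by (simp add: res_diff g_def)
  then obtain \<nu>0 where \<nu>0: "is_distribution q \<nu>0" "\<forall>x. tree_vertex q x \<longrightarrow> f x - hh x = Ig (phik q lam 0) \<nu>0 x"
    using harm_exists[OF q lam] by blast
  have "repr (Suc (Suc n)) (Ig (phik q lam 0) \<nu>0)" by (intro repr_Ig phik_W \<nu>0) simp
  then have "repr (Suc (Suc n)) (\<lambda>x. hh x + Ig (phik q lam 0) \<nu>0 x)" using rh repr_add by blast
  then show ?case
  proof (rule repr_cong, intro allI impI)
    fix x assume "tree_vertex q x"
    with \<nu>0(2) have "f x - hh x = Ig (phik q lam 0) \<nu>0 x" by blast
    then show "f x = hh x + Ig (phik q lam 0) \<nu>0 x" by (simp add: algebra_simps)
  qed
qed

end


theorem corollary5p4: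
  fixes q n :: nat and lam :: complex and f :: "nat list \<Rightarrow> complex"
  assumes "q \<ge> 2" and "n \<ge> 1"
    and "lam \<notin> complex_of_real ` {- spec_radius q .. spec_radius q}"
    and "polyharmonic q lam n f"
  shows "\<exists>nu :: nat \<Rightarrow> nat list \<Rightarrow> complex.
           (\<forall>k<n. is_distribution q (nu k)) \<and>
           (\<forall>x. tree_vertex q x \<longrightarrow> f x = (\<Sum>k<n. kernel_integral q lam k (nu k) x)) \<and>
           (\<forall>mu :: nat \<Rightarrow> nat list \<Rightarrow> complex.
              (\<forall>k<n. is_distribution q (mu k)) \<and>
              (\<forall>x. tree_vertex q x \<longrightarrow> f x = (\<Sum>k<n. kernel_integral q lam k (mu k) x))
              \<longrightarrow> (\<forall>k<n. \<forall>x. tree_vertex q x \<longrightarrow> mu k x = nu k x))"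
proof -
  interpret tsetting q lam using assms(1,3) by unfold_locales
  obtain n' where n': "n = Suc n'" using assms(2) by (cases n) auto
  obtain \<nu> where \<nu>: "\<forall>k<n. is_distribution q (\<nu> k)"
      "\<forall>x. tree_vertex q x \<longrightarrow> f x = (\<Sum>k<n. Ig (phik q lam k) (\<nu> k) x)"
    using exist[of n' f] assms(4) unfolding n' repr_def by blast
  show ?thesis
  proof (intro exI[where x=\<nu>] conjI allI impI)
    fix k assume "k < n" then show "is_distribution q (\<nu> k)" using \<nu> by simp
  next
    fix x assume "tree_vertex q x"
    then show "f x = (\<Sum>k<n. kernel_integral q lam k (\<nu> k) x)" using \<nu> by (simp add: kernel_Ig)
  next
    fix mu k x
    assume mu: "(\<forall>k<n. is_distribution q (mu k)) \<and>
              (\<forall>x. tree_vertex q x \<longrightarrow> f x = (\<Sum>k<n. kernel_integral q lam k (mu k) x))"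
      and k: "k < n" and x: "tree_vertex q x"
    define \<delta> where "\<delta> = (\<lambda>k y. mu k y - \<nu> k y)"
    have d: "\<forall>k<n. is_distribution q (\<delta> k)" unfolding \<delta>_def using mu \<nu> by (auto intro: dist_diff)
    have "\<forall>x. tree_vertex q x \<longrightarrow> (\<Sum>k<n. Ig (phik q lam k) (\<delta> k) x) = 0"
    proof (intro allI impI)
      fix x assume x: "tree_vertex q x"
      have "(\<Sum>k<n. Ig (phik q lam k) (\<delta> k) x) =
          (\<Sum>k<n. Ig (phik q lam k) (mu k) x) - (\<Sum>k<n. Ig (phik q lam k) (\<nu> k) x)"
        unfolding \<delta>_def Ig_diff_nu sum_subtractf ..
      also have "\<dots> = f x - f x" using mu \<nu> x by (simp add: kernel_Ig)
      finally show "(\<Sum>k<n. Ig (phik q lam k) (\<delta> k) x) = 0" by simp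
    qed
    then have "\<delta> k x = 0" using uniq[OF d] k x by blast
    then show "mu k x = \<nu> k x" unfolding \<delta>_def by simp
  qed
qed

end
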